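(* The (unital) $G$-graded ring $S$ is epsilon-strongly graded if and only if $S$ is nearly epsilon-strongly graded and $S_g$ is a finitely generated left $R$-module for every $g\in G$.
   Context: $G$ is a group with identity $e$; $S=\bigoplus_{g\in G}S_g$ is an associative unital ring graded by $G$ ($S_gS_h\subseteq S_{gh}$), $R=S_e$, and $XY$ denotes finite sums of products. For a ring $A$, a left $A$-module $M$ is s-unital if for each $m\in M$ there is $a\in A$ with $am=m$ (right analogously); an $(A,B)$-bimodule is s-unital if left s-unital over $A$ and right s-unital over $B$. $S$ is nearly epsilon-strongly graded if each $S_g$ is an s-unital $(S_gS_{g^{-1}},S_{g^{-1}}S_g)$-bimodule. $S$ is epsilon-strongly graded if each $S_g$ is a unital $(S_gS_{g^{-1}},S_{g^{-1}}S_g)$-bimodule, i.e. $S_gS_{g^{-1}}$ has an identity $\epsilon_g$ with $\epsilon_gs=s=s\epsilon_{g^{-1}}$ for $s\in S_g$. *)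

theory Defs
  imports Main
begin

text \<open>The group G is written additively (class group_add, not necessarily
commutative): identity 0, inverse uminus, product +.  The ring S is the whole
type 'a (a unital ring), with homogeneous components Sg g.\<close>

definition prods :: "'a::ring_1 set \<Rightarrow> 'a set \<Rightarrow> 'a set" where
  "prods X Y = {sum_list (map (\<lambda>(x, y). x * y) ps) | ps. set ps \<subseteq> X \<times> Y}"

definition additive_subgroup :: "'a::ring_1 set \<Rightarrow> bool" where
  "additive_subgroup A \<longleftrightarrow> 0 \<in> A \<and> (\<forall>x\<in>A. \<forall>y\<in>A. x + y \<in> A \<and> - x \<in> A)"

definition group_graded :: "('g::group_add \<Rightarrow> 'a::ring_1 set) \<Rightarrow> bool" where
  "group_graded Sg \<longleftrightarrow>
     (\<forall>g. additive_subgroup (Sg g)) \<and>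
     (\<forall>g h. \<forall>x\<in>Sg g. \<forall>y\<in>Sg h. x * y \<in> Sg (g + h)) \<and>
     (\<forall>s::'a. \<exists>F f. finite F \<and> (\<forall>g\<in>F. f g \<in> Sg g) \<and> s = (\<Sum>g\<in>F. f g)) \<and>
     (\<forall>F f. finite F \<longrightarrow> (\<forall>g\<in>F. f g \<in> Sg g) \<longrightarrow> (\<Sum>g\<in>F. f g) = 0
        \<longrightarrow> (\<forall>g\<in>F. f g = 0))"

definition nearly_epsilon_strongly_graded :: "('g::group_add \<Rightarrow> 'a::ring_1 set) \<Rightarrow> bool" where
  "nearly_epsilon_strongly_graded Sg \<longleftrightarrow>
     (\<forall>g. \<forall>s\<in>Sg g. (\<exists>a\<in>prods (Sg g) (Sg (- g)). a * s = s)
                 \<and> (\<exists>b\<in>prods (Sg (- g)) (Sg g). s * b = s))"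

definition epsilon_strongly_graded :: "('g::group_add \<Rightarrow> 'a::ring_1 set) \<Rightarrow> bool" where
  "epsilon_strongly_graded Sg \<longleftrightarrow>
     (\<forall>g. (\<exists>e\<in>prods (Sg g) (Sg (- g)).
              (\<forall>x\<in>prods (Sg g) (Sg (- g)). e * x = x \<and> x * e = x) \<and>
              (\<forall>s\<in>Sg g. e * s = s))
        \<and> (\<exists>e\<in>prods (Sg (- g)) (Sg g).
              (\<forall>x\<in>prods (Sg (- g)) (Sg g). e * x = x \<and> x * e = x) \<and>
              (\<forall>s\<in>Sg g. s * e = s)))"

definition fin_gen_left_module :: "'a::ring_1 set \<Rightarrow> 'a set \<Rightarrow> bool" where
  "fin_gen_left_module R M \<longleftrightarrow>
     (\<exists>F. finite F \<and> F \<subseteq> M \<and>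
        (\<forall>s\<in>M. \<exists>r. (\<forall>x\<in>F. r x \<in> R) \<and> s = (\<Sum>x\<in>F. r x * x)))"

end

theory Submission
  imports Defs
begin

lemma prods_induct[consumes 1, case_names zero step]:
  assumes "p \<in> prods X Y" "P 0" "\<And>x y q. x\<in>X \<Longrightarrow> y\<in>Y \<Longrightarrow> P q \<Longrightarrow> P (x*y+q)"
  shows "P p"
proof -
  obtain ps where p: "p = sum_list (map (\<lambda>(x, y). x * y) ps)" and s: "set ps \<subseteq> X \<times> Y"
    using assms(1) unfolding prods_def by blast
  have "P (sum_list (map (\<lambda>(x, y). x * y) ps))" using s
    by (induction ps) (auto intro: assms(2,3))
  thus ?thesis using p by simp
qed

lemma prods_zero: "0 \<in> prods X Y"
  unfolding prods_def by (rule CollectI, rule exI[of _ "[]"]) simp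

lemma prods_cons: "x\<in>X \<Longrightarrow> y\<in>Y \<Longrightarrow> q\<in>prods X Y \<Longrightarrow> x*y+q \<in> prods X Y"
proof -
  assume a: "x\<in>X" "y\<in>Y" "q\<in>prods X Y"
  then obtain ps where p: "q = sum_list (map (\<lambda>(x, y). x * y) ps)" and s: "set ps \<subseteq> X \<times> Y"
    unfolding prods_def by blast
  show ?thesis unfolding prods_def
    by (rule CollectI, rule exI[of _ "(x,y)#ps"]) (use a p s in auto)
qed

lemma prods_add: "p \<in> prods X Y \<Longrightarrow> q \<in> prods X Y \<Longrightarrow> p+q \<in> prods X Y"
  by (induction p rule: prods_induct) (auto simp: add.assoc intro: prods_cons)

lemma prods_neg: assumes h: "(\<forall>x\<in>X. -x\<in>X)" shows "p \<in> prods X Y \<Longrightarrow> -p \<in> prods X Y"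
  proof (induction p rule: prods_induct)
  case zero then show ?case by (simp add: prods_zero)
next
  case (step x y q)
  have "-(x*y+q) = (-x)*y + -q" by simp
  then show ?case using step h prods_cons by metis
qed

lemma prods_lmult: assumes h: "(\<forall>x\<in>X. c*x\<in>X')" shows "p \<in> prods X Y \<Longrightarrow> c*p \<in> prods X' Y"
  proof (induction p rule: prods_induct)
  case zero then show ?case by (simp add: prods_zero)
next
  case (step x y q)
  have "c*(x*y+q) = (c*x)*y + c*q" by (simp add: algebra_simps)
  then show ?case using step h prods_cons by metis
qed

lemma prods_rmult: assumes h: "(\<forall>y\<in>Y. y*c\<in>Y')" shows "p \<in> prods X Y \<Longrightarrow> p*c \<in> prods X Y'"
  proof (induction p rule: prods_induct)
  case zero then show ?case by (simp add: prods_zero)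
next
  case (step x y q)
  have "(x*y+q)*c = x*(y*c) + q*c" by (simp add: algebra_simps)
  then show ?case using step h prods_cons by metis
qed

lemma prods_rid: assumes h: "(\<forall>y\<in>Y. y*c = y)" shows "p \<in> prods X Y \<Longrightarrow> p*c = p"
  by (induction p rule: prods_induct) (use h in \<open>auto simp: algebra_simps\<close>)

lemma prods_lid: assumes h: "(\<forall>x\<in>X. c*x = x)" shows "p \<in> prods X Y \<Longrightarrow> c*p = p"
  by (induction p rule: prods_induct) (use h in \<open>auto simp: distrib_left mult.assoc[symmetric]\<close>)

context
  fixes Sg :: "'g::group_add \<Rightarrow> 'a::ring_1 set"
  assumes gg: "group_graded Sg"
begin

lemma gr_sub: "additive_subgroup (Sg g)" using gg by (simp add: group_graded_def)
lemma gr_zero: "0 \<in> Sg g" using gr_sub unfolding additive_subgroup_def by simp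
lemma gr_add: "x \<in> Sg g \<Longrightarrow> y \<in> Sg g \<Longrightarrow> x + y \<in> Sg g"
  using gr_sub[of g] unfolding additive_subgroup_def by simp
lemma gr_neg: "x \<in> Sg g \<Longrightarrow> - x \<in> Sg g"
  using gr_sub[of g] unfolding additive_subgroup_def by simp
lemma gr_diff: "x \<in> Sg g \<Longrightarrow> y \<in> Sg g \<Longrightarrow> x - y \<in> Sg g"
  unfolding diff_conv_add_uminus by (intro gr_add gr_neg)
lemma gr_mult: "x \<in> Sg g \<Longrightarrow> y \<in> Sg h \<Longrightarrow> x * y \<in> Sg (g + h)"
proof -
  have "\<forall>g h. \<forall>x\<in>Sg g. \<forall>y\<in>Sg h. x * y \<in> Sg (g + h)" using gg by (simp add: group_graded_def)
  then show "x \<in> Sg g \<Longrightarrow> y \<in> Sg h \<Longrightarrow> x * y \<in> Sg (g + h)" by blast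
qed

lemma prods_grade: "p \<in> prods (Sg g) (Sg h) \<Longrightarrow> p \<in> Sg (g+h)"
  by (induction p rule: prods_induct) (simp_all add: gr_zero gr_add gr_mult)

lemma prods_neg': "p \<in> prods (Sg g) (Sg h) \<Longrightarrow> -p \<in> prods (Sg g) (Sg h)"
  by (rule prods_neg) (auto intro: gr_neg)

lemma prods_diff: "p \<in> prods (Sg g) (Sg h) \<Longrightarrow> q \<in> prods (Sg g) (Sg h) \<Longrightarrow> p - q \<in> prods (Sg g) (Sg h)"
  unfolding diff_conv_add_uminus by (intro prods_add prods_neg')

lemma A_mult: "a \<in> prods (Sg g) (Sg (-g)) \<Longrightarrow> y \<in> Sg g \<Longrightarrow> a * y \<in> Sg g"
  using gr_mult[of a "g + -g" y g] prods_grade[of a g "-g"] by simp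

lemma B_mult: "b \<in> prods (Sg (-g)) (Sg g) \<Longrightarrow> y \<in> Sg g \<Longrightarrow> y * b \<in> Sg g"
  using gr_mult[of y g b "-g + g"] prods_grade[of b "-g" g] by simp

lemma comb_left:
  assumes ne: "\<forall>y\<in>Sg g. \<exists>a\<in>prods (Sg g) (Sg (-g)). a*y = y"
  shows "finite F \<Longrightarrow> F \<subseteq> Sg g \<Longrightarrow> \<exists>a\<in>prods (Sg g) (Sg (-g)). \<forall>y\<in>F. a*y = y"
proof (induction F rule: finite_induct)
  case empty then show ?case using prods_zero by blast
next
  case (insert y F)
  then obtain a1 where a1: "a1 \<in> prods (Sg g) (Sg (-g))" "\<forall>z\<in>F. a1*z = z" by auto
  have yg: "y \<in> Sg g" using insert by auto
  have "y - a1*y \<in> Sg g" using gr_diff[OF yg A_mult[OF a1(1) yg]] .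
  then obtain a2 where a2: "a2 \<in> prods (Sg g) (Sg (-g))" "a2*(y - a1*y) = y - a1*y" using ne by blast
  have a21: "a2*a1 \<in> prods (Sg g) (Sg (-g))"
    by (rule prods_lmult[OF _ a1(1)]) (use A_mult[OF a2(1)] in blast)
  define a where "a = a1 + a2 - a2*a1"
  have "a \<in> prods (Sg g) (Sg (-g))" unfolding a_def
    by (intro prods_diff prods_add a1 a2 a21)
  moreover have "a*z = z" if "z\<in>F" for z
  proof -
    have "a*z = a1*z + a2*z - a2*(a1*z)" unfolding a_def by (simp add: algebra_simps)
    then show ?thesis using a1(2) that by simp
  qed
  moreover have "a*y = y"
  proof -
    have "a*y = a1*y + a2*(y - a1*y)" unfolding a_def by (simp add: algebra_simps)
    then show ?thesis using a2(2) by simp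
  qed
  ultimately show ?case by auto
qed

lemma comb_right:
  assumes ne: "\<forall>y\<in>Sg g. \<exists>b\<in>prods (Sg (-g)) (Sg g). y*b = y"
  shows "finite F \<Longrightarrow> F \<subseteq> Sg g \<Longrightarrow> \<exists>b\<in>prods (Sg (-g)) (Sg g). \<forall>y\<in>F. y*b = y"
proof (induction F rule: finite_induct)
  case empty then show ?case using prods_zero by blast
next
  case (insert y F)
  then obtain b1 where b1: "b1 \<in> prods (Sg (-g)) (Sg g)" "\<forall>z\<in>F. z*b1 = z" by auto
  have yg: "y \<in> Sg g" using insert by auto
  have "y - y*b1 \<in> Sg g" using gr_diff[OF yg B_mult[OF b1(1) yg]] .
  then obtain b2 where b2: "b2 \<in> prods (Sg (-g)) (Sg g)" "(y - y*b1)*b2 = y - y*b1" using ne by blast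
  have b12: "b1*b2 \<in> prods (Sg (-g)) (Sg g)"
    by (rule prods_rmult[OF _ b1(1)]) (use B_mult[OF b2(1)] in blast)
  define b where "b = b1 + b2 - b1*b2"
  have "b \<in> prods (Sg (-g)) (Sg g)" unfolding b_def
    by (intro prods_diff prods_add b1 b2 b12)
  moreover have "z*b = z" if "z\<in>F" for z
  proof -
    have "z*b = z*b1 + z*b2 - (z*b1)*b2" unfolding b_def by (simp add: algebra_simps)
    then show ?thesis using b1(2) that by simp
  qed
  moreover have "y*b = y"
  proof -
    have "y*b = y*b1 + (y - y*b1)*b2" unfolding b_def by (simp add: algebra_simps)
    then show ?thesis using b2(2) by simp
  qed
  ultimately show ?case by auto
qed

lemma right_unit:
  assumes ne: "nearly_epsilon_strongly_graded Sg" and fg: "fin_gen_left_module (Sg 0) (Sg h)"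
  shows "\<exists>f\<in>prods (Sg (-h)) (Sg h). \<forall>s\<in>Sg h. s*f = s"
proof -
  from fg obtain F where F: "finite F" "F \<subseteq> Sg h"
    and rep: "\<forall>s\<in>Sg h. \<exists>r. (\<forall>x\<in>F. r x \<in> Sg 0) \<and> s = (\<Sum>x\<in>F. r x * x)"
    unfolding fin_gen_left_module_def by (elim exE conjE) 
  have ne': "\<forall>y\<in>Sg h. \<exists>b\<in>prods (Sg (-h)) (Sg h). y*b=y"
    using ne unfolding nearly_epsilon_strongly_graded_def by simp
  obtain f where f: "f \<in> prods (Sg (-h)) (Sg h)" "\<forall>y\<in>F. y*f = y"
    using comb_right[OF ne' F] by (elim bexE)
  have "s*f = s" if sh: "s\<in>Sg h" for s
  proof -
    obtain r where sr: "s = (\<Sum>x\<in>F. r x * x)" using bspec[OF rep sh] by (elim exE conjE)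
    have "(\<Sum>x\<in>F. r x * x) * f = (\<Sum>x\<in>F. r x * (x*f))" by (simp add: sum_distrib_right mult.assoc)
    also have "\<dots> = (\<Sum>x\<in>F. r x * x)" using f(2) by simp
    finally show ?thesis using sr by simp
  qed
  then show ?thesis using f(1) by (intro bexI[of _ f]) auto
qed

lemma prods_own: "set ps \<subseteq> X \<times> Y \<Longrightarrow>
   sum_list (map (\<lambda>(x, y). x * y) ps) \<in> prods (fst ` set ps) (snd ` set ps)"
  unfolding prods_def by (rule CollectI, rule exI[of _ ps]) force

lemma left_unit:
  assumes ne: "nearly_epsilon_strongly_graded Sg"
    and f: "f \<in> prods (Sg g) (Sg (-g))" and ft: "\<forall>t\<in>Sg (-g). t*f = t"
  shows "\<forall>s\<in>Sg g. f*s = s" "\<forall>x\<in>prods (Sg g) (Sg (-g)). x*f = x \<and> f*x = x"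
proof -
  have ne': "\<forall>y\<in>Sg g. \<exists>a\<in>prods (Sg g) (Sg (-g)). a*y = y"
    using ne unfolding nearly_epsilon_strongly_graded_def by blast
  obtain ps where fps: "f = sum_list (map (\<lambda>(x, y). x * y) ps)" and ps: "set ps \<subseteq> Sg g \<times> Sg (-g)"
    using f unfolding prods_def by blast
  have fown: "f \<in> prods (fst ` set ps) (snd ` set ps)" using prods_own[OF ps] fps by simp
  show fs: "\<forall>s\<in>Sg g. f*s = s"
  proof
    fix s assume s: "s \<in> Sg g"
    have "finite (insert s (fst ` set ps))" by simp
    moreover have "insert s (fst ` set ps) \<subseteq> Sg g" using s ps by auto
    ultimately obtain a where a: "a \<in> prods (Sg g) (Sg (-g))" "\<forall>y\<in>insert s (fst ` set ps). a*y = y"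
      using comb_left[OF ne'] by blast
    have "a*f = f" using a(2) prods_lid[OF _ fown] by blast
    moreover have "a*f = a" using prods_rid[OF ft a(1)] .
    ultimately have "a = f" by simp
    then show "f*s = s" using a(2) by simp
  qed
  show "\<forall>x\<in>prods (Sg g) (Sg (-g)). x*f = x \<and> f*x = x"
    using prods_rid[OF ft] prods_lid[OF fs] by blast
qed

lemma group_sum:
  assumes "finite F"
  shows "set ps \<subseteq> Sg 0 \<times> F \<Longrightarrow> \<exists>r. (\<forall>x\<in>F. r x \<in> Sg 0) \<and> sum_list (map (\<lambda>(c,x). c*x) ps) = (\<Sum>x\<in>F. r x * x)"
proof (induction ps)
  case Nil
  then show ?case by (intro exI[of _ "\<lambda>_. 0"]) (simp add: gr_zero)
next
  case (Cons p ps)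
  obtain c x where p: "p = (c,x)" by fastforce
  from Cons obtain r where r: "\<forall>x\<in>F. r x \<in> Sg 0" "sum_list (map (\<lambda>(c,x). c*x) ps) = (\<Sum>x\<in>F. r x * x)"
    by auto
  have cx: "c \<in> Sg 0" "x \<in> F" using Cons(2) p by auto
  define r' where "r' = (\<lambda>y. r y + (if y = x then c else 0))"
  have "\<forall>y\<in>F. r' y \<in> Sg 0" unfolding r'_def using r(1) cx by (simp add: gr_add)
  moreover have "(\<Sum>y\<in>F. r' y * y) = (\<Sum>y\<in>F. r y * y + (if y = x then c * y else 0))"
    by (rule sum.cong) (auto simp: r'_def distrib_right)
  then have "(\<Sum>y\<in>F. r' y * y) = (\<Sum>y\<in>F. r y * y) + (\<Sum>y\<in>F. if y = x then c * y else 0)"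
    by (simp only: sum.distrib)
  then have "(\<Sum>y\<in>F. r' y * y) = (\<Sum>y\<in>F. r y * y) + c*x"
    using cx assms by (simp add: sum.delta)
  ultimately show ?case using r(2) p by (intro exI[of _ r']) (simp add: add.commute)
qed

lemma mult_sum_list: "(s::'a::ring_1) * sum_list (map (\<lambda>(x, y). x * y) ps) = sum_list (map (\<lambda>(x, y). (s*x) * y) ps)"
  by (induction ps) (auto simp: distrib_left mult.assoc)

theorem main_ctx:
  shows "epsilon_strongly_graded Sg \<longleftrightarrow>
           (nearly_epsilon_strongly_graded Sg \<and> (\<forall>g. fin_gen_left_module (Sg 0) (Sg g)))"
proof
  assume eps: "epsilon_strongly_graded Sg"
  have "nearly_epsilon_strongly_graded Sg"
    unfolding nearly_epsilon_strongly_graded_def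
  proof (intro allI ballI conjI)
    fix g s assume "s \<in> Sg g"
    then show "\<exists>a\<in>prods (Sg g) (Sg (- g)). a * s = s" "\<exists>b\<in>prods (Sg (- g)) (Sg g). s * b = s"
      using eps unfolding epsilon_strongly_graded_def by blast+
  qed
  moreover have "fin_gen_left_module (Sg 0) (Sg g)" for g
  proof -
    obtain e where e: "e \<in> prods (Sg (- g)) (Sg g)" "\<forall>s\<in>Sg g. s * e = s"
      using eps unfolding epsilon_strongly_graded_def by blast
    obtain ps where eps': "e = sum_list (map (\<lambda>(x, y). x * y) ps)" and ps: "set ps \<subseteq> Sg (-g) \<times> Sg g"
      using e(1) unfolding prods_def by blast
    define F where "F = snd ` set ps"
    have F: "finite F" "F \<subseteq> Sg g" unfolding F_def using ps by auto
    have "\<exists>r. (\<forall>x\<in>F. r x \<in> Sg 0) \<and> s = (\<Sum>x\<in>F. r x * x)" if s: "s \<in> Sg g" for s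
    proof -
      let ?qs = "map (\<lambda>(b,a). (s*b, a)) ps"
      have "set ?qs \<subseteq> Sg 0 \<times> F"
      proof
        fix q assume "q \<in> set ?qs"
        then obtain b a where ba: "(b,a) \<in> set ps" "q = (s*b, a)" by auto
        have "s*b \<in> Sg (g + -g)" using gr_mult s ps ba(1) by blast
        then show "q \<in> Sg 0 \<times> F" using ba unfolding F_def by force
      qed
      then obtain r where r: "\<forall>x\<in>F. r x \<in> Sg 0" "sum_list (map (\<lambda>(c,x). c*x) ?qs) = (\<Sum>x\<in>F. r x * x)"
        using group_sum[OF F(1)] by blast
      have "sum_list (map (\<lambda>(c,x). c*x) ?qs) = s * e"
        unfolding eps' mult_sum_list by (simp add: comp_def split_def)
      then show ?thesis using r e(2) s by auto
    qed
    then show ?thesis unfolding fin_gen_left_module_def using F by blast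
  qed
  ultimately show "nearly_epsilon_strongly_graded Sg \<and> (\<forall>g. fin_gen_left_module (Sg 0) (Sg g))"
    by blast
next
  assume h: "nearly_epsilon_strongly_graded Sg \<and> (\<forall>g. fin_gen_left_module (Sg 0) (Sg g))"
  then have ne: "nearly_epsilon_strongly_graded Sg" by blast
  show "epsilon_strongly_graded Sg"
    unfolding epsilon_strongly_graded_def
  proof (intro allI conjI)
    fix g
    obtain f where f: "f \<in> prods (Sg (uminus (uminus g))) (Sg (-g))" "\<forall>t\<in>Sg (-g). t*f = t"
      using right_unit[OF ne, of "-g"] h by blast
    have f1: "f \<in> prods (Sg g) (Sg (-g))" using f(1) by simp
    show "\<exists>e\<in>prods (Sg g) (Sg (- g)).
            (\<forall>x\<in>prods (Sg g) (Sg (- g)). e * x = x \<and> x * e = x) \<and> (\<forall>s\<in>Sg g. e * s = s)"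
      using left_unit[OF ne f1 f(2)] f1 by blast
    obtain f' where f': "f' \<in> prods (Sg (-g)) (Sg g)" "\<forall>s\<in>Sg g. s*f' = s"
      using right_unit[OF ne, of g] h by blast
    have f'1: "f' \<in> prods (Sg (-g)) (Sg (uminus (uminus g)))" "\<forall>s\<in>Sg (uminus (uminus g)). s*f' = s" using f' by simp_all
    have "\<forall>x\<in>prods (Sg (-g)) (Sg (uminus (uminus g))). x*f' = x \<and> f'*x = x"
      using left_unit[OF ne f'1] by blast
    then show "\<exists>e\<in>prods (Sg (- g)) (Sg g).
            (\<forall>x\<in>prods (Sg (- g)) (Sg g). e * x = x \<and> x * e = x) \<and> (\<forall>s\<in>Sg g. s * e = s)"
      using f' by auto
  qed
qed

end

theorem mainTheorem5:
  fixes Sg :: "'g::group_add \<Rightarrow> 'a::ring_1 set"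
  assumes "group_graded Sg"
  shows "epsilon_strongly_graded Sg \<longleftrightarrow>
           (nearly_epsilon_strongly_graded Sg \<and> (\<forall>g. fin_gen_left_module (Sg 0) (Sg g)))"
  using main_ctx[OF assms] .

end
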